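(* Let $\mathbb{F}$ be a field and let $\mathcal{A}$ be a unital $\mathbb{F}$-algebra of dimension $n>2$. Then $l(\mathcal{A})=2^{n-2}$ if and only if $\mathcal{A}$ has a long basis $E=\{e_0,e_1,\ldots,e_{n-1}\}$ such that $e_pe_q\in\langle e_0,\ldots,e_{\max(p,q)}\rangle$ for all $p,q\in\{0,\ldots,n-1\}$ with $p\neq q$.
   Context: Algebras are finite-dimensional, unital, not necessarily associative. For a finite generating set $S$ of $\mathcal{A}$, a word in $S$ is any product (with any bracketing) of finitely many elements of $S$; its length is the number of factors, and $1$ is a word of length $0$. $L_i(S)$ is the linear span of all words in $S$ of length at most $i$. The length of $S$ is $l(S)=\min\{k\ge0: L_k(S)=\mathcal{A}\}$, and $l(\mathcal{A})=\max\{l(S): S\text{ a finite generating set of }\mathcal{A}\}$. (It is known that $2^{n-2}$ is the maximal possible length of such an algebra of dimension $n\ge2$.) A basis $\{e_0,e_1,\ldots,e_{n-1}\}$ of $\mathcal{A}$ is called long if $e_0=1$ and $e_i^2=e_{i+1}$ for $i=1,\ldots,n-2$. $\langle\cdot\rangle$ denotes linear span. *)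

theory Defs
  imports Complex_Main
begin

text \<open>A finite-dimensional unital, not necessarily associative algebra over a field 'k,
  with carrier type 'v, scalar multiplication sc, product mul and unit one.\<close>

definition unital_fd_algebra ::
  "('k::field \<Rightarrow> 'v::ab_group_add \<Rightarrow> 'v) \<Rightarrow> ('v \<Rightarrow> 'v \<Rightarrow> 'v) \<Rightarrow> 'v \<Rightarrow> bool" where
  "unital_fd_algebra sc mul one \<longleftrightarrow>
     vector_space sc \<and>
     (\<forall>z. Vector_Spaces.linear sc sc (\<lambda>x. mul x z)) \<and>
     (\<forall>x. Vector_Spaces.linear sc sc (\<lambda>z. mul x z)) \<and>
     (\<forall>x. mul one x = x \<and> mul x one = x) \<and>
     (\<exists>B. finite B \<and> module.span sc B = UNIV)"

definition alg_dim :: "('k::field \<Rightarrow> 'v::ab_group_add \<Rightarrow> 'v) \<Rightarrow> nat" where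
  "alg_dim sc = vector_space.dim sc (UNIV :: 'v set)"

text \<open>word mul one S w i: w is a word in S of length i (any bracketing; 1 has length 0)\<close>
inductive word :: "('v \<Rightarrow> 'v \<Rightarrow> 'v) \<Rightarrow> 'v \<Rightarrow> 'v set \<Rightarrow> 'v \<Rightarrow> nat \<Rightarrow> bool"
  for mul :: "'v \<Rightarrow> 'v \<Rightarrow> 'v" and one :: 'v and S :: "'v set" where
  word_one: "word mul one S one 0"
| word_gen: "s \<in> S \<Longrightarrow> word mul one S s 1"
| word_mul: "word mul one S u i \<Longrightarrow> word mul one S v j \<Longrightarrow> word mul one S (mul u v) (i + j)"

definition Lspan :: "('k::field \<Rightarrow> 'v::ab_group_add \<Rightarrow> 'v) \<Rightarrow> ('v \<Rightarrow> 'v \<Rightarrow> 'v) \<Rightarrow> 'v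
    \<Rightarrow> 'v set \<Rightarrow> nat \<Rightarrow> 'v set" where
  "Lspan sc mul one S i = module.span sc {w. \<exists>j\<le>i. word mul one S w j}"

definition gen_set :: "('k::field \<Rightarrow> 'v::ab_group_add \<Rightarrow> 'v) \<Rightarrow> ('v \<Rightarrow> 'v \<Rightarrow> 'v) \<Rightarrow> 'v
    \<Rightarrow> 'v set \<Rightarrow> bool" where
  "gen_set sc mul one S \<longleftrightarrow> finite S \<and> module.span sc {w. \<exists>j. word mul one S w j} = UNIV"

definition set_length :: "('k::field \<Rightarrow> 'v::ab_group_add \<Rightarrow> 'v) \<Rightarrow> ('v \<Rightarrow> 'v \<Rightarrow> 'v) \<Rightarrow> 'v
    \<Rightarrow> 'v set \<Rightarrow> nat" where
  "set_length sc mul one S = (LEAST k. Lspan sc mul one S k = UNIV)"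

text \<open>l(A): maximum of l(S) over finite generating sets (the set of values is bounded)\<close>
definition alg_length :: "('k::field \<Rightarrow> 'v::ab_group_add \<Rightarrow> 'v) \<Rightarrow> ('v \<Rightarrow> 'v \<Rightarrow> 'v) \<Rightarrow> 'v \<Rightarrow> nat" where
  "alg_length sc mul one = Sup {set_length sc mul one S | S. gen_set sc mul one S}"

definition long_basis :: "('k::field \<Rightarrow> 'v::ab_group_add \<Rightarrow> 'v) \<Rightarrow> ('v \<Rightarrow> 'v \<Rightarrow> 'v) \<Rightarrow> 'v
    \<Rightarrow> nat \<Rightarrow> (nat \<Rightarrow> 'v) \<Rightarrow> bool" where
  "long_basis sc mul one n e \<longleftrightarrow>
     inj_on e {..<n} \<and> \<not> module.dependent sc (e ` {..<n}) \<and>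
     module.span sc (e ` {..<n}) = UNIV \<and>
     e 0 = one \<and> (\<forall>i. 1 \<le> i \<and> i \<le> n - 2 \<longrightarrow> mul (e i) (e i) = e (i + 1))"

end

theory Submission
  imports Defs
begin


locale ualg = finite_dimensional_vector_space sc Basis
  for sc :: "'k::field \<Rightarrow> 'v::ab_group_add \<Rightarrow> 'v" and Basis :: "'v set" +
  fixes mul :: "'v \<Rightarrow> 'v \<Rightarrow> 'v" and one :: 'v
  assumes linl: "\<And>z. Vector_Spaces.linear sc sc (\<lambda>x. mul x z)"
  and linr: "\<And>x. Vector_Spaces.linear sc sc (\<lambda>z. mul x z)"
  and unitl: "\<And>x. mul one x = x" and unitr: "\<And>x. mul x one = x"
  and dimgt: "2 < dim UNIV"
begin

abbreviation "L S k \<equiv> Lspan sc mul one S k"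

lemma mul_addL: "mul (x + y) z = mul x z + mul y z"
  using linl[of z] by (simp add: Vector_Spaces.linear_iff)
lemma mul_addR: "mul z (x + y) = mul z x + mul z y"
  using linr[of z] by (simp add: Vector_Spaces.linear_iff)
lemma mul_scaleL: "mul (sc c x) z = sc c (mul x z)"
  using linl[of z] by (simp add: Vector_Spaces.linear_iff)
lemma mul_scaleR: "mul z (sc c x) = sc c (mul z x)"
  using linr[of z] by (simp add: Vector_Spaces.linear_iff)
lemma mul_zeroL: "mul 0 z = 0"
  by (metis mul_scaleL scale_zero_left)
lemma mul_zeroR: "mul z 0 = 0"
  by (metis mul_scaleR scale_zero_left)

lemma bilin:
  assumes T: "subspace T" and AB: "\<And>x y. x \<in> A \<Longrightarrow> y \<in> B \<Longrightarrow> mul x y \<in> T"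
    and x: "x \<in> span A" and y: "y \<in> span B"
  shows "mul x y \<in> T"
proof -
  have 1: "mul a y \<in> T" if a: "a \<in> A" for a
  proof -
    have "subspace {y. mul a y \<in> T}"
      using T unfolding subspace_def by (auto simp: mul_zeroR mul_addR mul_scaleR)
    then show ?thesis using span_induct[OF y, of "\<lambda>y. mul a y \<in> T"] AB a by auto
  qed
  have "subspace {x. mul x y \<in> T}"
    using T unfolding subspace_def by (auto simp: mul_zeroL mul_addL mul_scaleL)
  then show ?thesis using span_induct[OF x, of "\<lambda>x. mul x y \<in> T"] 1 by auto
qed

lemma one_ne0: "one \<noteq> 0"
proof
  assume "one = 0"
  then have "x = 0" for x :: 'v using unitl[of x] mul_zeroL by simp
  then have "UNIV \<subseteq> {0::'v}" by auto
  then have "dim (UNIV::'v set) = 0" by (rule iffD2[OF dim_eq_0])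
  then show False using dimgt by simp
qed

lemma word0: "word mul one S w k \<Longrightarrow> k = 0 \<Longrightarrow> w = one"
  by (induction rule: word.induct) (auto simp: unitl)

lemma word_L: "word mul one S w k \<Longrightarrow> w \<in> L S k"
  unfolding Lspan_def by (rule span_base) auto

lemma L_mono: "i \<le> j \<Longrightarrow> L S i \<subseteq> L S j"
  unfolding Lspan_def by (rule span_mono) (auto intro: le_trans)

lemma L_sub: "subspace (L S k)"
  unfolding Lspan_def by simp

lemma L_span: "span (L S k) = L S k"
  unfolding Lspan_def by (simp add: span_span)

lemma L0: "L S 0 = span {one}"
proof -
  have "{w. \<exists>j\<le>0. word mul one S w j} = {one}"
    using word0[of S] word.word_one[of mul one S] by auto
  then show ?thesis unfolding Lspan_def by simp
qed

lemma Lmul: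
  assumes x: "x \<in> L S a" and y: "y \<in> L S b" shows "mul x y \<in> L S (a + b)"
proof -
  let ?A = "{w. \<exists>j\<le>a. word mul one S w j}" and ?B = "{w. \<exists>j\<le>b. word mul one S w j}"
  have 1: "mul u v \<in> L S (a+b)" if "u \<in> ?A" "v \<in> ?B" for u v
  proof -
    from that obtain i j where ij: "i \<le> a" "word mul one S u i" "j \<le> b" "word mul one S v j" by auto
    then have "word mul one S (mul u v) (i+j)" by (intro word.word_mul)
    moreover have "i + j \<le> a + b" using ij by simp
    ultimately show ?thesis unfolding Lspan_def by (intro span_base) auto
  qed
  have x': "x \<in> span ?A" using x unfolding Lspan_def .
  have y': "y \<in> span ?B" using y unfolding Lspan_def .
  show ?thesis by (rule bilin[OF L_sub 1 x' y'])
qed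

lemma stab_word:
  assumes "L S 1 \<subseteq> L S m" "L S (2*m) \<subseteq> L S m"
  shows "word mul one S w k \<Longrightarrow> w \<in> L S m"
proof (induction rule: word.induct)
  case word_one
  then show ?case using word_L[OF word.word_one] L_mono[of 0 m] by auto
next
  case (word_gen s)
  then show ?case using word_L[OF word.word_gen] assms(1) by auto
next
  case (word_mul u i v j)
  then show ?case using Lmul[of u S m v m] assms(2) by (auto simp: mult_2)
qed

lemma stab:
  assumes "gen_set sc mul one S" "L S 1 \<subseteq> L S m" "L S (2*m) \<subseteq> L S m"
  shows "L S m = UNIV"
proof -
  have "{w. \<exists>j. word mul one S w j} \<subseteq> L S m" using stab_word[OF assms(2,3)] by auto
  then have "span {w. \<exists>j. word mul one S w j} \<subseteq> L S m"
    by (rule span_minimal[OF _ L_sub])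
  then show ?thesis using assms(1) unfolding gen_set_def by auto
qed

lemma dimL0: "dim (L S 0) = 1"
  unfolding L0 dim_span using dim_eq_card_independent[of "{one}"] one_ne0 by simp

lemma L_dim_less: "L S a \<subset> L S b \<Longrightarrow> dim (L S a) < dim (L S b)"
  unfolding Lspan_def using dim_psubset by (metis dim_span)

lemma L_proper: "L S a \<noteq> UNIV \<Longrightarrow> dim (L S a) < dim (UNIV::'v set)"
  by (metis L_span dim_eq_full dim_subset_UNIV dim_UNIV dimension_def le_neq_implies_less)

lemma L01: assumes "gen_set sc mul one S" shows "L S 0 \<subset> L S 1"
proof -
  have "L S 0 \<noteq> UNIV" using dimL0[of S] dimgt by auto
  then have "\<not> L S 1 \<subseteq> L S 0" using stab[OF assms, of 0] by auto
  then show ?thesis using L_mono[of 0 1 S] by auto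
qed

lemma dimL1: assumes "gen_set sc mul one S" shows "2 \<le> dim (L S 1)"
  using L_dim_less[OF L01[OF assms]] dimL0 by simp

lemma growth:
  assumes "gen_set sc mul one S" "1 \<le> m"
  shows "L S (2^i * m) \<noteq> UNIV \<Longrightarrow> dim (L S m) + i \<le> dim (L S (2^i * m))"
proof (induction i)
  case 0
  then show ?case by simp
next
  case (Suc i)
  have ne: "L S (2^i * m) \<noteq> UNIV" using Suc.prems L_mono[of "2^i*m" "2^Suc i * m" S] by auto
  have h1: "L S 1 \<subseteq> L S (2^i*m)" using L_mono assms(2) by (simp add: Suc_le_eq)
  have "\<not> L S (2*(2^i*m)) \<subseteq> L S (2^i*m)"
  proof
    assume "L S (2*(2^i*m)) \<subseteq> L S (2^i*m)"
    from stab[OF assms(1) h1 this] ne show False by simp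
  qed
  then have "L S (2^i*m) \<subset> L S (2^Suc i*m)" using L_mono[of "2^i*m" "2^Suc i * m" S] by (auto simp: mult.assoc)
  then show ?case using Suc.IH[OF ne] L_dim_less[of S "2^i*m" "2^Suc i * m"] by simp
qed

lemma upper: assumes "gen_set sc mul one S" shows "L S (2^(dim (UNIV::'v set) - 2)) = UNIV"
proof (rule ccontr)
  assume a: "L S (2^(dim (UNIV::'v set) - 2)) \<noteq> UNIV"
  have "dim (L S 1) + (dim (UNIV::'v set) - 2) \<le> dim (L S (2^(dim (UNIV::'v set) - 2)))"
    using growth[OF assms order_refl, of "dim (UNIV::'v set) - 2"] a by simp
  then show False using L_proper[OF a] dimL1[OF assms] by linarith
qed

lemma set_length_le: assumes "gen_set sc mul one S"
  shows "set_length sc mul one S \<le> 2^(dim (UNIV::'v set) - 2)"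
  unfolding set_length_def by (rule Least_le, rule upper[OF assms])

end


definition seqe :: "('v \<Rightarrow> 'v \<Rightarrow> 'v) \<Rightarrow> 'v \<Rightarrow> 'v \<Rightarrow> nat \<Rightarrow> 'v" where
  "seqe mul one a i = (if i = 0 then one else ((\<lambda>x. mul x x)^^(i-1)) a)"

definition idx :: "nat \<Rightarrow> nat" where "idx i = (if i = 0 then 0 else 2^(i-1))"

lemma seqe0[simp]: "seqe mul one a 0 = one" by (simp add: seqe_def)
lemma seqe1[simp]: "seqe mul one a (Suc 0) = a" by (simp add: seqe_def)
lemma seqeS: "1 \<le> i \<Longrightarrow> seqe mul one a (Suc i) = mul (seqe mul one a i) (seqe mul one a i)"
  by (cases i) (auto simp: seqe_def)

lemma idx_mono: "r \<le> m \<Longrightarrow> idx r \<le> idx m"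
  by (auto simp: idx_def)
lemma idxS[simp]: "idx (Suc i) = 2^i" by (simp add: idx_def)

locale ualg_long = ualg sc Basis mul one
  for sc :: "'k::field \<Rightarrow> 'v::ab_group_add \<Rightarrow> 'v" and Basis mul one +
  fixes S assumes genS: "gen_set sc mul one S"
  and notfull: "L S (2^(dim (UNIV::'v set) - 2) - 1) \<noteq> UNIV"
begin

lemma small_notfull: "k < 2^(dim (UNIV::'v set) - 2) \<Longrightarrow> L S k \<noteq> UNIV"
proof -
  assume "k < 2^(dim (UNIV::'v set) - 2)"
  then have "k \<le> 2^(dim (UNIV::'v set) - 2) - 1" by linarith
  then show ?thesis using notfull L_mono[of k "2^(dim (UNIV::'v set) - 2) - 1" S] by blast
qed

lemma dimbound:
  assumes "j + 3 \<le> dim (UNIV::'v set)" "1 \<le> k" "k < 2^(j+1)"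
  shows "dim (L S k) \<le> j + 2"
proof -
  define i where "i = dim (UNIV::'v set) - 3 - j"
  have e: "i + (j + 1) = dim (UNIV::'v set) - 2" using assms(1) unfolding i_def by simp
  have "2^i * k < 2^i * 2^(j+1)" using assms(3) by simp
  also have "\<dots> = 2^(dim (UNIV::'v set) - 2)" using e by (metis power_add)
  finally have nf: "L S (2^i * k) \<noteq> UNIV" by (rule small_notfull)
  have "dim (L S k) + i \<le> dim (L S (2^i * k))" by (rule growth[OF genS assms(2) nf])
  moreover have "dim (L S (2^i * k)) < dim (UNIV::'v set)" by (rule L_proper[OF nf])
  ultimately show ?thesis using assms(1) unfolding i_def by linarith
qed

lemma lowbound:
  assumes "j + 3 \<le> dim (UNIV::'v set)"
  shows "j + 2 \<le> dim (L S (2^j))"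
proof -
  have "(2::nat)^j < 2^(dim (UNIV::'v set) - 2)" using assms by (intro power_strict_increasing) auto
  then have nf: "L S (2^j * 1) \<noteq> UNIV" using small_notfull by simp
  have "dim (L S 1) + j \<le> dim (L S (2^j * 1))" by (rule growth[OF genS order_refl nf])
  then show ?thesis using dimL1[OF genS] by simp
qed

lemma stable:
  assumes "j + 3 \<le> dim (UNIV::'v set)" "2^j \<le> k" "k < 2^(j+1)"
  shows "L S k = L S (2^j)"
proof -
  have k1: "1 \<le> k" using assms(2) by (meson le_trans one_le_power one_le_numeral)
  have "dim (L S k) \<le> dim (L S (2^j))"
    using dimbound[OF assms(1) k1 assms(3)] lowbound[OF assms(1)] by linarith
  then have "span (L S (2^j)) = span (L S k)"
    by (intro dim_eq_span L_mono assms(2))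
  then show ?thesis by (simp add: L_span)
qed

end


lemma pow_aux: assumes "1 \<le> (t::nat)" shows "2^(t-1) \<le> (2::nat)^t - 1" "(2::nat)^t - 1 < 2^(t - 1 + 1)"
proof -
  obtain r where r: "t = Suc r" using assms by (cases t) auto
  have "(1::nat) \<le> 2^r" by simp
  then show "2^(t-1) \<le> (2::nat)^t - 1" "(2::nat)^t - 1 < 2^(t - 1 + 1)" using r by auto
qed

locale ualg_long2 = ualg_long sc Basis mul one S
  for sc :: "'k::field \<Rightarrow> 'v::ab_group_add \<Rightarrow> 'v" and Basis mul one S +
  fixes a assumes aL1: "a \<in> L S 1" and aL0: "a \<notin> L S 0"
begin

abbreviation "e \<equiv> seqe mul one a"

lemma e_L: "e i \<in> L S (idx i)"
proof (induction i)
  case 0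
  then show ?case using word_L[OF word.word_one] by (simp add: idx_def)
next
  case (Suc i)
  show ?case
  proof (cases i)
    case 0
    then show ?thesis using aL1 by simp
  next
    case (Suc t)
    then have "e (Suc i) = mul (e i) (e i)" by (simp add: seqeS)
    moreover have "mul (e i) (e i) \<in> L S (idx i + idx i)" by (rule Lmul[OF Suc.IH Suc.IH])
    ultimately show ?thesis using Suc by (simp add: idx_def mult_2)
  qed
qed

lemma base1: "span (e ` {0..1}) = L S 1"
proof -
  have "{0..1::nat} = {0, 1}" by auto
  then have img: "e ` {0..1} = {one, a}" by simp
  have "a \<notin> span {one}" using aL0 by (simp add: L0)
  moreover have "independent {one}" using one_ne0 by simp
  ultimately have ind: "independent {one, a}" by (simp add: independent_insert insert_commute)
  have ne: "a \<noteq> one" using aL0 word_L[OF word.word_one[of mul one S]] by auto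
  have d2: "dim {one, a} = 2" using dim_eq_card_independent[OF ind] ne by simp
  have sub: "{one, a} \<subseteq> L S 1" using aL1 word_L[OF word.word_one[of mul one S]] L_mono[of 0 1 S] by auto
  have "dim (L S 1) \<le> 2" using dimbound[of 0 1] dimgt by simp
  then have "span {one, a} = span (L S 1)" using d2 by (intro dim_eq_span sub) simp
  then show ?thesis using img L_span by simp
qed

abbreviation "nn \<equiv> dim (UNIV::'v set)"

lemma lowmul:
  assumes i: "2 \<le> i" "i + 2 \<le> nn" and x: "x \<in> L S (2^(i-2))" and y: "y \<in> L S (2^(i-1))"
  shows "mul x y \<in> L S (2^(i-1))" "mul y x \<in> L S (2^(i-1))"
proof -
  obtain t where t: "i = 2 + t" using le_Suc_ex[OF i(1)] by blast
  have st: "L S (2^t + 2^(t+1)) = L S (2^(t+1))"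
    by (rule stable) (use i t in auto)
  have x': "x \<in> L S (2^t)" and y': "y \<in> L S (2^(t+1))" using x y t by simp_all
  show "mul x y \<in> L S (2^(i-1))" using Lmul[OF x' y'] st t by simp
  show "mul y x \<in> L S (2^(i-1))" using Lmul[OF y' x'] st t by (simp add: add.commute)
qed

lemma step:
  assumes i1: "1 \<le> i" and i2: "i + 2 \<le> nn" and IH: "span (e ` {0..i}) = L S (2^(i-1))"
  shows "span (e ` {0..Suc i}) = L S (2^i)"
proof -
  obtain t where t: "i = Suc t" using i1 by (cases i) auto
  define T where "T = span (e ` {0..Suc i})"
  have Tsub: "subspace T" unfolding T_def by simp
  have "L S (2^t) = span (e ` {0..i})" using IH t by simp
  moreover have "span (e ` {0..i}) \<subseteq> T" unfolding T_def by (rule span_mono) auto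
  ultimately have sub1: "L S (2^t) \<subseteq> T" by simp
  have eT: "e r \<in> T" if "r \<le> Suc i" for r unfolding T_def using that by (intro span_base) auto
  have st1: "L S (2^i - 1) = L S (2^t)"
    by (rule stable) (use i2 t in auto)
  have elem: "mul (e r) (e s) \<in> T" if rs: "r \<le> i" "s \<le> i" for r s
  proof -
    consider "r = i \<and> s = i" | "r = 0" | "s = 0" | "1 \<le> r \<and> 1 \<le> s \<and> r < i" | "1 \<le> r \<and> 1 \<le> s \<and> s < i"
      using rs by linarith
    then show ?thesis
    proof cases
      case 1
      then show ?thesis using eT[of "Suc i"] seqeS[OF i1, of mul one a] by simp
    next
      case 2
      then show ?thesis using eT[of s] rs unitl by simp
    next
      case 3
      then show ?thesis using eT[of r] rs unitr by simp
    next
      case 4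
      then have "idx r \<le> 2^(i-2)" by (auto simp: idx_def)
      then have er: "e r \<in> L S (2^(i-2))" using e_L[of r] L_mono by blast
      have "idx s \<le> 2^(i-1)" using idx_mono[OF rs(2)] i1 by (simp add: idx_def)
      then have es: "e s \<in> L S (2^(i-1))" using e_L[of s] L_mono by blast
      have "2 \<le> i" using 4 by simp
      then show ?thesis using lowmul(1)[OF _ i2 er es] sub1 t by auto
    next
      case 5
      then have "idx s \<le> 2^(i-2)" by (auto simp: idx_def)
      then have es: "e s \<in> L S (2^(i-2))" using e_L[of s] L_mono by blast
      have "idx r \<le> 2^(i-1)" using idx_mono[OF rs(1)] i1 by (simp add: idx_def)
      then have er: "e r \<in> L S (2^(i-1))" using e_L[of r] L_mono by blast
      have "2 \<le> i" using 5 by simp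
      then show ?thesis using lowmul(2)[OF _ i2 es er] sub1 t by auto
    qed
  qed
  have key: "w \<in> T" if "word mul one S w k" "k \<le> 2^i" for w k
    using that
  proof (induction rule: word.induct)
    case word_one
    then show ?case using eT[of 0] by simp
  next
    case (word_gen s)
    have "L S 1 \<subseteq> L S (2^t)" by (rule L_mono) simp
    then show ?case using word_L[OF word.word_gen[OF word_gen.hyps]] sub1 by auto
  next
    case (word_mul u p v q)
    have u: "u \<in> L S p" and v: "v \<in> L S q" using word_mul.hyps by (simp_all add: word_L)
    consider "p = 0" | "q = 0" | "p + q < 2^i" | "p = 2^t \<and> q = 2^t" | "1 \<le> p \<and> p < 2^t \<and> 1 \<le> q \<and> p + q = 2^i"
      | "1 \<le> q \<and> q < 2^t \<and> 1 \<le> p \<and> p + q = 2^i"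
      using word_mul.prems t by fastforce
    then show ?case
    proof cases
      case 1
      then show ?thesis using word0[OF word_mul.hyps(1)] unitl word_mul.IH(2) word_mul.prems by simp
    next
      case 2
      then show ?thesis using word0[OF word_mul.hyps(2)] unitr word_mul.IH(1) word_mul.prems by simp
    next
      case 3
      then have "L S (p + q) \<subseteq> L S (2^i - 1)" by (intro L_mono) simp
      then show ?thesis using Lmul[OF u v] st1 sub1 by auto
    next
      case 4
      then have u': "u \<in> span (e ` {0..i})" and v': "v \<in> span (e ` {0..i})" using u v IH t by simp_all
      show ?thesis by (rule bilin[OF Tsub _ u' v']) (use elem in auto)
    next
      case 5
      then have t1: "1 \<le> t" using t by (cases t) auto
      have "L S p \<subseteq> L S (2^t - 1)" using 5 by (intro L_mono) linarith
      moreover have "L S (2^t - 1) = L S (2^(t-1))"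
        by (rule stable) (use i2 t t1 pow_aux[OF t1] in auto)
      ultimately have u': "u \<in> L S (2^(i-2))" using u t by auto
      have "L S q \<subseteq> L S (2^i - 1)" using 5 by (intro L_mono) linarith
      then have v': "v \<in> L S (2^(i-1))" using v st1 t by auto
      have "2 \<le> i" using t t1 by simp
      then show ?thesis using lowmul(1)[OF _ i2 u' v'] sub1 t by auto
    next
      case 6
      then have t1: "1 \<le> t" using t by (cases t) auto
      have "L S q \<subseteq> L S (2^t - 1)" using 6 by (intro L_mono) linarith
      moreover have "L S (2^t - 1) = L S (2^(t-1))"
        by (rule stable) (use i2 t t1 pow_aux[OF t1] in auto)
      ultimately have v': "v \<in> L S (2^(i-2))" using v t by auto
      have "L S p \<subseteq> L S (2^i - 1)" using 6 by (intro L_mono) linarith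
      then have u': "u \<in> L S (2^(i-1))" using u st1 t by auto
      have "2 \<le> i" using t t1 by simp
      then show ?thesis using lowmul(2)[OF _ i2 v' u'] sub1 t by auto
    qed
  qed
  have "L S (2^i) \<subseteq> T"
    unfolding Lspan_def by (rule span_minimal[OF _ Tsub]) (use key in auto)
  moreover have "T \<subseteq> L S (2^i)"
  proof -
    have "e r \<in> L S (2^i)" if "r \<le> Suc i" for r
      using e_L[of r] L_mono[OF idx_mono[OF that], of S] by auto
    then show ?thesis unfolding T_def by (intro span_minimal L_sub) auto
  qed
  ultimately show ?thesis unfolding T_def by auto
qed

lemma allspan: "1 \<le> i \<Longrightarrow> i + 1 \<le> nn \<Longrightarrow> span (e ` {0..i}) = L S (2^(i-1))"
proof (induction i)
  case 0
  then show ?case by simp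
next
  case (Suc i)
  show ?case
  proof (cases "i = 0")
    case True
    then show ?thesis using base1 by simp
  next
    case False
    then have "span (e`{0..i}) = L S (2^(i-1))" using Suc by simp
    then show ?thesis using step[of i] False Suc.prems by simp
  qed
qed

lemma full: "span (e ` {0..nn-1}) = UNIV"
proof -
  have "span (e ` {0..nn-1}) = L S (2^(nn-1-1))" using allspan[of "nn-1"] dimgt by simp
  also have "nn - 1 - 1 = nn - 2" by simp
  finally show ?thesis using upper[OF genS] by simp
qed

lemma idx_lt: "p < q \<Longrightarrow> idx p < 2^(q-1)"
  by (auto simp: idx_def intro: power_strict_increasing)

lemma tri:
  assumes pq: "p < q" "q < nn"
  shows "mul (e p) (e q) \<in> span (e ` {0..q}) \<and> mul (e q) (e p) \<in> span (e ` {0..q})"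
proof (cases "q = nn - 1")
  case True
  then show ?thesis using full by simp
next
  case False
  then have q2: "q + 2 \<le> nn" and q1: "1 \<le> q" using pq by auto
  have iq: "idx q = 2^(q-1)" using q1 by (simp add: idx_def)
  have lt: "idx p < 2^(q-1)" by (rule idx_lt[OF pq(1)])
  have "2^q = 2 * (2::nat)^(q-1)" using q1 by (cases q) auto
  then have st: "L S (idx p + idx q) = L S (2^(q-1))"
    by (intro stable) (use q1 q2 iq lt in auto)
  have sp: "span (e ` {0..q}) = L S (2^(q-1))" using allspan[OF q1] q2 by simp
  have "mul (e p) (e q) \<in> L S (idx p + idx q)" by (rule Lmul[OF e_L e_L])
  moreover have "mul (e q) (e p) \<in> L S (idx p + idx q)" using Lmul[OF e_L e_L, of q p] by (simp add: add.commute)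
  ultimately show ?thesis using st sp by simp
qed

lemma conclusion:
  "long_basis sc mul one nn e \<and>
       (\<forall>p<nn. \<forall>q<nn. p \<noteq> q \<longrightarrow> mul (e p) (e q) \<in> span (e ` {0..max p q}))"
proof -
  have iv: "{..<nn} = {0..nn-1}" using dimgt by auto
  have sp: "span (e ` {..<nn}) = UNIV" using full iv by simp
  have fin: "finite (e ` {..<nn})" by simp
  have c1: "card (e ` {..<nn}) \<le> nn" using card_image_le[of "{..<nn}" e] by simp
  have c2: "nn \<le> card (e ` {..<nn})" using dim_le_card[of UNIV "e ` {..<nn}"] sp fin by simp
  have ind: "independent (e ` {..<nn})"
    by (rule card_le_dim_spanning[of _ UNIV]) (use sp fin c1 in auto)
  have inj: "inj_on e {..<nn}" by (rule eq_card_imp_inj_on) (use c1 c2 in auto)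
  have sq: "\<forall>i. 1 \<le> i \<and> i \<le> nn - 2 \<longrightarrow> mul (e i) (e i) = e (i + 1)"
    using seqeS[of _ mul one a] by simp
  have lb: "long_basis sc mul one nn e"
    unfolding long_basis_def using inj ind sp sq by simp
  have tr: "mul (e p) (e q) \<in> span (e ` {0..max p q})" if "p < nn" "q < nn" "p \<noteq> q" for p q
  proof (cases "p < q")
    case True
    then show ?thesis using tri[OF True that(2)] by (simp add: max_def)
  next
    case False
    then have qp: "q < p" using that by simp
    have "max p q = p" using qp by simp
    then show ?thesis using tri[OF qp that(1)] by simp
  qed
  show ?thesis using lb tr by blast
qed

end


locale ualg_lb = ualg sc Basis mul one
  for sc :: "'k::field \<Rightarrow> 'v::ab_group_add \<Rightarrow> 'v" and Basis mul one +
  fixes e :: "nat \<Rightarrow> 'v"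
  assumes lb: "long_basis sc mul one (dim (UNIV::'v set)) e"
  and tr: "\<forall>p<dim (UNIV::'v set). \<forall>q<dim (UNIV::'v set). p \<noteq> q \<longrightarrow>
          mul (e p) (e q) \<in> span (e ` {0..max p q})"
begin

abbreviation "nn \<equiv> dim (UNIV::'v set)"
abbreviation "V t \<equiv> span (e ` {0..t})"

lemma lb_inj: "inj_on e {..<nn}" and lb_ind: "independent (e ` {..<nn})"
  and lb_span: "span (e ` {..<nn}) = UNIV" and lb_e0: "e 0 = one"
  and lb_sq: "\<And>i. 1 \<le> i \<Longrightarrow> i \<le> nn - 2 \<Longrightarrow> mul (e i) (e i) = e (i + 1)"
  using lb unfolding long_basis_def by auto

lemma V_mono: "s \<le> t \<Longrightarrow> V s \<subseteq> V t"
  by (rule span_mono) auto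

lemma eV: "r \<le> t \<Longrightarrow> e r \<in> V t"
  by (rule span_base) auto

lemma Mp:
  assumes t: "1 \<le> t" "t \<le> nn - 2" and x: "x \<in> V (t-1)" and y: "y \<in> V t"
  shows "mul x y \<in> V t \<and> mul y x \<in> V t"
proof -
  have elem: "mul (e r) (e s) \<in> V t \<and> mul (e s) (e r) \<in> V t" if rs: "r \<le> t - 1" "s \<le> t" for r s
  proof (cases "r = s")
    case False
    have "r < nn" "s < nn" using rs t dimgt by auto
    then have "mul (e r) (e s) \<in> span (e ` {0..max r s})" "mul (e s) (e r) \<in> span (e ` {0..max s r})"
      using tr False by auto
    moreover have "max r s \<le> t" "max s r \<le> t" using rs t by auto
    ultimately show ?thesis using V_mono by blast
  next
    case True
    show ?thesis
    proof (cases "r = 0")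
      case True
      then show ?thesis using \<open>r = s\<close> lb_e0 unitl eV[of 0 t] by simp
    next
      case False
      then have "mul (e r) (e r) = e (r + 1)" using lb_sq[of r] rs t by simp
      moreover have "r + 1 \<le> t" using rs t False by linarith
      ultimately show ?thesis using \<open>r = s\<close> eV by simp
    qed
  qed
  have "mul x y \<in> V t" by (rule bilin[OF subspace_span _ x y]) (use elem in auto)
  moreover have "mul y x \<in> V t" by (rule bilin[OF subspace_span _ y x]) (use elem in auto)
  ultimately show ?thesis by simp
qed

lemma wordV:
  assumes "word mul one {e 1} w k"
  shows "\<forall>t. k < 2^t \<longrightarrow> t \<le> nn - 2 \<longrightarrow> w \<in> V t"
  using assms
proof (induction rule: word.induct)
  case word_one
  then show ?case using eV[of 0] lb_e0 by auto
next
  case (word_gen s)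
  show ?case
  proof (intro allI impI)
    fix t :: nat assume "(1::nat) < 2^t"
    then have "1 \<le> t" by (cases t) auto
    then show "s \<in> V t" using word_gen eV by simp
  qed
next
  case (word_mul u p v q)
  show ?case
  proof (intro allI impI)
    fix t :: nat assume pq: "p + q < 2^t" and t: "t \<le> nn - 2"
    show "mul u v \<in> V t"
    proof (cases t)
      case 0
      then have "p = 0" "q = 0" using pq by auto
      then have "u = one" "v = one" using word0 word_mul.hyps by auto
      then show ?thesis using unitl eV[of 0 t] lb_e0 by simp
    next
      case (Suc r)
      have t1: "1 \<le> t" using Suc by simp
      have pw: "2^t = 2 * (2::nat)^(t-1)" using Suc by simp
      consider "p < 2^(t-1) \<and> q < 2^(t-1)" | "q < 2^(t-1) \<and> p < 2^t" | "p < 2^(t-1) \<and> q < 2^t"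
        using pq pw by linarith
      then show ?thesis
      proof cases
        case 1
        have "t - 1 \<le> nn - 2" using t by simp
        then have u: "u \<in> V (t-1)" and v: "v \<in> V (t-1)" using word_mul.IH 1 by auto
        have "v \<in> V t" using v V_mono[of "t-1" t] by auto
        then show ?thesis using Mp[OF t1 t u] by simp
      next
        case 2
        have "t - 1 \<le> nn - 2" using t by simp
        then have u: "u \<in> V t" and v: "v \<in> V (t-1)" using word_mul.IH 2 t by auto
        then show ?thesis using Mp[OF t1 t v u] by simp
      next
        case 3
        have "t - 1 \<le> nn - 2" using t by simp
        then have u: "u \<in> V (t-1)" and v: "v \<in> V t" using word_mul.IH 3 t by auto
        then show ?thesis using Mp[OF t1 t u v] by simp
      qed
    qed
  qed
qed

lemma Vproper: "V (nn - 2) \<noteq> UNIV"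
proof
  assume a: "V (nn - 2) = UNIV"
  have sub: "e ` {0..nn-2} \<subseteq> e ` {..<nn} - {e (nn - 1)}"
  proof
    fix x assume "x \<in> e ` {0..nn-2}"
    then obtain i where i: "i \<le> nn - 2" "x = e i" by auto
    have "e i \<noteq> e (nn - 1)"
    proof
      assume "e i = e (nn - 1)"
      then have "i = nn - 1" using inj_onD[OF lb_inj] i dimgt by auto
      then show False using i dimgt by simp
    qed
    then show "x \<in> e ` {..<nn} - {e (nn - 1)}" using i dimgt by auto
  qed
  have "e (nn - 1) \<in> span (e ` {..<nn} - {e (nn - 1)})"
    using a span_mono[OF sub] by auto
  moreover have "e (nn - 1) \<in> e ` {..<nn}" using dimgt by auto
  ultimately have "dependent (e ` {..<nn})" unfolding dependent_def by blast
  then show False using lb_ind by simp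
qed

lemma L_small: assumes "k < 2^(nn-2)" shows "L {e 1} k \<subseteq> V (nn - 2)"
  unfolding Lspan_def
proof (rule span_minimal[OF _ subspace_span])
  show "{w. \<exists>j\<le>k. word mul one {e 1} w j} \<subseteq> V (nn - 2)"
    using wordV assms by fastforce
qed

lemma e_word: "i \<le> nn - 1 \<Longrightarrow> word mul one {e 1} (e i) (idx i)"
proof (induction i)
  case 0
  then show ?case using lb_e0 word.word_one by (simp add: idx_def)
next
  case (Suc i)
  show ?case
  proof (cases i)
    case 0
    then show ?thesis using word.word_gen[of "e 1" "{e 1}"] by (simp add: idx_def)
  next
    case (Suc t)
    then have "e (Suc i) = mul (e i) (e i)" using lb_sq[of i] Suc.prems by simp
    moreover have "word mul one {e 1} (mul (e i) (e i)) (idx i + idx i)"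
      using Suc.IH Suc.prems by (intro word.word_mul) auto
    ultimately show ?thesis using Suc by (simp add: idx_def mult_2)
  qed
qed

lemma gen1: "gen_set sc mul one {e 1}"
proof -
  have "e i \<in> {w. \<exists>j. word mul one {e 1} w j}" if "i < nn" for i
  proof -
    have "i \<le> nn - 1" using that by simp
    then show ?thesis using e_word[of i] by blast
  qed
  then have "e ` {..<nn} \<subseteq> {w. \<exists>j. word mul one {e 1} w j}" by auto
  then have "span (e ` {..<nn}) \<subseteq> span {w. \<exists>j. word mul one {e 1} w j}" by (rule span_mono)
  then show ?thesis unfolding gen_set_def using lb_span by auto
qed

lemma len1: "set_length sc mul one {e 1} = 2^(nn - 2)"
  unfolding set_length_def
proof (rule Least_equality)
  show "L {e 1} (2^(nn-2)) = UNIV" by (rule upper[OF gen1])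
  show "2^(nn-2) \<le> k" if "L {e 1} k = UNIV" for k
  proof (rule ccontr)
    assume "\<not> 2^(nn-2) \<le> k"
    then have "L {e 1} k \<subseteq> V (nn - 2)" using L_small by simp
    then show False using that Vproper by auto
  qed
qed

end

lemma two_le_pow: "1 \<le> m \<Longrightarrow> (2::nat) \<le> 2^m"
  by (cases m) auto

theorem theorem6p5:
  fixes sc :: "'k::field \<Rightarrow> 'v::ab_group_add \<Rightarrow> 'v"
    and mul :: "'v \<Rightarrow> 'v \<Rightarrow> 'v" and one :: 'v
  assumes "unital_fd_algebra sc mul one"
    and "alg_dim sc > 2"
  shows "alg_length sc mul one = 2 ^ (alg_dim sc - 2) \<longleftrightarrow>
    (\<exists>e. long_basis sc mul one (alg_dim sc) e \<and>
       (\<forall>p<alg_dim sc. \<forall>q<alg_dim sc. p \<noteq> q \<longrightarrow>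
          mul (e p) (e q) \<in> module.span sc (e ` {0..max p q})))"
proof -
  have vs: "vector_space sc" and linl: "\<And>z. Vector_Spaces.linear sc sc (\<lambda>x. mul x z)"
    and linr: "\<And>x. Vector_Spaces.linear sc sc (\<lambda>z. mul x z)"
    and ul: "\<And>x. mul one x = x" and ur: "\<And>x. mul x one = x"
    and exB: "\<exists>B. finite B \<and> module.span sc B = UNIV"
    using assms(1) unfolding unital_fd_algebra_def by auto
  interpret vs: vector_space sc by (rule vs)
  obtain B where B: "finite B" "vs.span B = UNIV" using exB by auto
  obtain Bs where Bs: "Bs \<subseteq> B" "vs.independent Bs" "B \<subseteq> vs.span Bs" "card Bs = vs.dim B"
    by (rule vs.basis_exists)
  have finBs: "finite Bs" using Bs(1) B(1) finite_subset by blast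
  have "vs.span B \<subseteq> vs.span Bs" using Bs(3) by (simp add: vs.span_minimal)
  then have spBs: "vs.span Bs = UNIV" using B(2) by auto
  have d2: "2 < vs.dim (UNIV::'v set)" using assms(2) unfolding alg_dim_def by simp
  have Uf: "ualg sc Bs mul one"
  proof (rule ualg.intro)
    show "finite_dimensional_vector_space sc Bs"
      by (rule finite_dimensional_vector_space.intro[OF vs],
          rule finite_dimensional_vector_space_axioms.intro[OF finBs Bs(2) spBs])
    show "ualg_axioms sc mul one"
      by (rule ualg_axioms.intro) (use linl linr ul ur d2 in auto)
  qed
  interpret U: ualg sc Bs mul one by (rule Uf)
  have ad: "alg_dim sc = vs.dim UNIV" unfolding alg_dim_def by simp
  define N where "N = (2::nat) ^ (vs.dim (UNIV::'v set) - 2)"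
  define X where "X = {set_length sc mul one S | S. gen_set sc mul one S}"
  have al: "alg_length sc mul one = Sup X" unfolding alg_length_def X_def by simp
  have bnd: "x \<le> N" if "x \<in> X" for x
  proof -
    from that obtain S where "x = set_length sc mul one S" "gen_set sc mul one S" unfolding X_def by blast
    then show ?thesis using U.set_length_le[of S] unfolding N_def by simp
  qed
  have h1: "1 \<le> vs.dim (UNIV::'v set) - 2" using U.dimgt by linarith
  have N2: "2 \<le> N" unfolding N_def by (rule two_le_pow[OF h1])
  have genB: "gen_set sc mul one B"
  proof -
    have "B \<subseteq> {w. \<exists>j. word mul one B w j}"
    proof
      fix x assume "x \<in> B"
      then have "word mul one B x 1" by (rule word.word_gen)
      then show "x \<in> {w. \<exists>j. word mul one B w j}" by blast
    qed
    then have "vs.span B \<subseteq> vs.span {w. \<exists>j. word mul one B w j}" by (rule vs.span_mono)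
    then show ?thesis unfolding gen_set_def using B by auto
  qed
  have Xne: "X \<noteq> {}" using genB unfolding X_def by auto
  have "X \<subseteq> {..N}" using bnd by auto
  then have finX: "finite X" by (rule finite_subset) simp
  show ?thesis
  proof
    assume "alg_length sc mul one = 2 ^ (alg_dim sc - 2)"
    then have "Sup X = N" using al ad N_def by simp
    moreover have "Sup X \<in> X" using finX Xne by (simp add: cSup_eq_Max)
    ultimately have "N \<in> X" by simp
    then obtain S where S: "gen_set sc mul one S" "set_length sc mul one S = N" unfolding X_def by auto
    have nf: "U.L S (N - 1) \<noteq> UNIV"
    proof
      assume "U.L S (N - 1) = UNIV"
      then have "set_length sc mul one S \<le> N - 1" unfolding set_length_def by (rule Least_le)
      then show False using S(2) N2 by simp
    qed
    have ULf: "ualg_long sc Bs mul one S"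
      by (rule ualg_long.intro[OF Uf], rule ualg_long_axioms.intro) (use S(1) nf N_def in auto)
    interpret UL: ualg_long sc Bs mul one S by (rule ULf)
    obtain a where a: "a \<in> U.L S 1" "a \<notin> U.L S 0" using U.L01[OF S(1)] by auto
    have UL2f: "ualg_long2 sc Bs mul one S a"
      by (rule ualg_long2.intro[OF ULf], rule ualg_long2_axioms.intro) (use a in auto)
    interpret UL2: ualg_long2 sc Bs mul one S a by (rule UL2f)
    show "\<exists>e. long_basis sc mul one (alg_dim sc) e \<and>
       (\<forall>p<alg_dim sc. \<forall>q<alg_dim sc. p \<noteq> q \<longrightarrow>
          mul (e p) (e q) \<in> module.span sc (e ` {0..max p q}))"
      using UL2.conclusion ad by auto
  next
    assume "\<exists>e. long_basis sc mul one (alg_dim sc) e \<and>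
       (\<forall>p<alg_dim sc. \<forall>q<alg_dim sc. p \<noteq> q \<longrightarrow>
          mul (e p) (e q) \<in> module.span sc (e ` {0..max p q}))"
    then obtain e where e: "long_basis sc mul one (vs.dim UNIV) e"
      "\<forall>p<vs.dim UNIV. \<forall>q<vs.dim UNIV. p \<noteq> q \<longrightarrow> mul (e p) (e q) \<in> vs.span (e ` {0..max p q})"
      using ad by auto
    have LBf: "ualg_lb sc Bs mul one e"
      by (rule ualg_lb.intro[OF Uf], rule ualg_lb_axioms.intro) (use e in auto)
    interpret LB: ualg_lb sc Bs mul one e by (rule LBf)
    have "N = set_length sc mul one {e 1}" using LB.len1 unfolding N_def by simp
    then have "N \<in> X" unfolding X_def using LB.gen1 by blast
    then have "Sup X = N" using bnd by (rule cSup_eq_maximum)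
    then show "alg_length sc mul one = 2 ^ (alg_dim sc - 2)" using al ad N_def by simp
  qed
qed

end
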